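(* Let $\alpha\ge0$, $\beta\ge0$, $\gamma<0$, $\omega^2=1$, $c,a\in\mathbb{R}$ with $ca>0$, $N\ge2$, and $r>0$. Consider $$\dot{x}_i=y_i+\frac{ca}{N}\sum_{j=1}^N(x_j-x_i),\qquad \dot{y}_i=-(\alpha x_i^2+\beta y_i^2-\gamma)y_i-\omega^2x_i+\frac{ca}{N}\sum_{j=1}^N(y_j-y_i),\quad i=1,\dots,N.$$ Suppose one of the following holds: (1) $\alpha=0$ and $3\beta r^2>\gamma-ca$; (2) $\alpha\neq0$, $\alpha>3\beta$, $r^2\le\frac{ca\alpha-3ca\beta}{\alpha^2}$, and $3\beta r^2>\gamma-ca$; (3) $\alpha\neq0$, $\alpha<3\beta$, $r^2\le\frac{3ca\beta-ca\alpha}{\alpha^2}$, and $\alpha r^2>\gamma-ca$; (4) $3ca\alpha\beta+\alpha^2(ca-\gamma)>0$, $r^2\ge\max\{\frac{ca\alpha-3ca\beta}{\alpha^2},\frac{3ca\beta-ca\alpha}{\alpha^2}\}$, and $\frac{ca\alpha+3ca\beta-2\sqrt{3c^2a^2\alpha\beta+\alpha^2ca(ca-\gamma)}}{\alpha^2}<r^2<\frac{ca\alpha+3ca\beta+2\sqrt{3c^2a^2\alpha\beta+\alpha^2ca(ca-\gamma)}}{\alpha^2}$. If $x_i(0)^2+y_i(0)^2\le r^2$ for all $i=1,\dots,N$, then $|x_i(t)-x_j(t)|+|y_i(t)-y_j(t)|\to0$ exponentially as $t\to\infty$ for all $i,j$ (complete synchronization). *)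

theory Defs
  imports "HOL-Analysis.Analysis"
begin

definition coupled_solution ::
  "real \<Rightarrow> real \<Rightarrow> real \<Rightarrow> real \<Rightarrow> real \<Rightarrow> real \<Rightarrow> nat \<Rightarrow>
   (real \<Rightarrow> nat \<Rightarrow> real) \<Rightarrow> (real \<Rightarrow> nat \<Rightarrow> real) \<Rightarrow> bool" where
  "coupled_solution \<alpha> \<beta> \<gamma> \<omega> c a N x y \<longleftrightarrow>
     (\<forall>i<N. \<forall>t\<ge>0.
        ((\<lambda>s. x s i) has_real_derivative
            (y t i + (c * a / real N) * (\<Sum>j<N. x t j - x t i))) (at t within {0..}) \<and>
        ((\<lambda>s. y s i) has_real_derivative
            (- (\<alpha> * (x t i)^2 + \<beta> * (y t i)^2 - \<gamma>) * y t i - \<omega>^2 * x t i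
             + (c * a / real N) * (\<Sum>j<N. y t j - y t i))) (at t within {0..}))"

end

theory Submission
  imports Defs
begin


lemma nonincr_from_deriv:
  fixes f f' :: "real \<Rightarrow> real"
  assumes d: "\<And>t. t \<ge> 0 \<Longrightarrow> (f has_real_derivative f' t) (at t within {0..})"
    and n: "\<And>t. t \<ge> 0 \<Longrightarrow> f' t \<le> 0" and t: "t \<ge> 0"
  shows "f t \<le> f 0"
proof (rule DERIV_nonpos_imp_decreasing_open[OF t])
  fix s assume s: "0 < s" "s < t"
  have "at s within {0..} = at s"
    by (rule at_within_interior) (use s in auto)
  then show "\<exists>y. DERIV f s :> y \<and> y \<le> 0" using d[of s] n[of s] s by auto
next
  show "continuous_on {0..t} f"
    by (rule DERIV_continuous_on[where D=f'])
       (rule has_field_derivative_subset[OF d], auto)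
qed

definition pos2 :: "real \<Rightarrow> real" where "pos2 z = (max z 0)^2"

lemma pos2_deriv: "(pos2 has_real_derivative (2 * max z 0)) (at z)"
proof -
  consider "z > 0" | "z < 0" | "z = 0" by linarith
  then show ?thesis
  proof cases
    case 1
    have "((\<lambda>w. w^2) has_real_derivative (2 * max z 0)) (at z)"
      using 1 by (auto intro!: derivative_eq_intros)
    then show ?thesis
      by (rule has_field_derivative_transform_within_open[where S="{0<..}"])
         (use 1 in \<open>auto simp: pos2_def\<close>)
  next
    case 2
    have "((\<lambda>w. 0) has_real_derivative (2 * max z 0)) (at z)"
      using 2 by (auto intro!: derivative_eq_intros)
    then show ?thesis
      by (rule has_field_derivative_transform_within_open[where S="{..<0}"])
         (use 2 in \<open>auto simp: pos2_def\<close>)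
  next
    case 3
    have "((\<lambda>h::real. max h 0) \<longlongrightarrow> 0) (at 0)"
      using tendsto_max[OF tendsto_ident_at[of "0::real" UNIV] tendsto_const[of "0::real"]] by simp
    moreover have "\<forall>\<^sub>F h in at 0. max h 0 = (pos2 (0 + h) - pos2 0) / h"
      unfolding eventually_at_filter
      by (auto simp: pos2_def power2_eq_square max_def)
    ultimately have "((\<lambda>h. (pos2 (0 + h) - pos2 0) / h) \<longlongrightarrow> 0) (at 0)"
      using tendsto_cong by fastforce
    then show ?thesis using 3 by (simp add: DERIV_def)
  qed
qed

lemma comb_ineq:
  fixes z :: "nat \<Rightarrow> real"
  shows "(\<Sum>i<N. max (z i) 0 * (\<Sum>j<N. z j - z i)) \<le> 0"
proof -
  define w where "w i = max (z i) 0" for i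
  have "(\<Sum>i<N. w i * (\<Sum>j<N. z j - z i)) = (\<Sum>i<N. \<Sum>j<N. w i * z j - w i * z i)"
    by (simp add: sum_distrib_left right_diff_distrib)
  also have "\<dots> \<le> (\<Sum>i<N. \<Sum>j<N. w i * w j - w i * w i)"
  proof (intro sum_mono)
    fix i j
    have w0: "w i \<ge> 0" "z j \<le> w j" by (auto simp: w_def)
    have "w i * z j \<le> w i * w j" by (rule mult_left_mono[OF w0(2) w0(1)])
    moreover have "w i * z i = w i * w i" by (simp add: w_def max_def)
    ultimately show "w i * z j - w i * z i \<le> w i * w j - w i * w i" by linarith
  qed
  also have "\<dots> = - (1/2) * (\<Sum>i<N. \<Sum>j<N. (w i - w j)^2)"
  proof -
    have a: "(\<Sum>i<N. \<Sum>j<N. w j * w j) = (\<Sum>i<N. \<Sum>j<N. w i * w i)"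
      by (rule sum.swap)
    have c: "(\<Sum>i<N. \<Sum>j<N. (w i - w j)^2) = (\<Sum>i<N. \<Sum>j<N. w i * w i) + (\<Sum>i<N. \<Sum>j<N. w j * w j) - 2 * (\<Sum>i<N. \<Sum>j<N. w i * w j)"
      by (simp add: power2_eq_square algebra_simps sum.distrib sum_subtractf sum_distrib_left)
    have b: "(\<Sum>i<N. \<Sum>j<N. w i * w j - w i * w i) = (\<Sum>i<N. \<Sum>j<N. w i * w j) - (\<Sum>i<N. \<Sum>j<N. w i * w i)"
      by (simp only: sum_subtractf)
    show ?thesis using a b c by linarith
  qed
  also have "\<dots> \<le> 0" by (simp add: sum_nonneg)
  finally show ?thesis by (simp add: w_def)
qed



lemma mvt_f:
  fixes \<alpha> \<beta> \<gamma> x1 y1 x2 y2 R :: real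
  assumes d1: "x1^2+y1^2 \<le> R" and d2: "x2^2+y2^2 \<le> R"
  shows "\<exists>X Y. X^2+Y^2 \<le> R \<and> (\<alpha>*x1^2+\<beta>*y1^2-\<gamma>)*y1 - (\<alpha>*x2^2+\<beta>*y2^2-\<gamma>)*y2
           = 2*\<alpha>*X*Y*(x1-x2) + (\<alpha>*X^2+3*\<beta>*Y^2-\<gamma>)*(y1-y2)"
proof -
  define u where "u = x1 - x2"
  define v where "v = y1 - y2"
  define F where "F s = (\<alpha>*(x2+s*u)^2+\<beta>*(y2+s* v)^2-\<gamma>)*(y2+s* v)" for s
  define F' where "F' s = 2*\<alpha>*(x2+s*u)*(y2+s* v)*u + (\<alpha>*(x2+s*u)^2+3*\<beta>*(y2+s* v)^2-\<gamma>)* v" for s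
  have "\<And>s. 0 \<le> s \<Longrightarrow> s \<le> 1 \<Longrightarrow> DERIV F s :> F' s"
    unfolding F_def F'_def
    by (auto intro!: derivative_eq_intros simp: algebra_simps power2_eq_square)
  from MVT2[OF zero_less_one this] obtain s where s: "0 < s" "s < 1" "F 1 - F 0 = (1 - 0) * F' s"
    by blast
  define X where "X = x2 + s*u"
  define Y where "Y = y2 + s* v"
  have id: "(1-s)*(x2^2+y2^2) + s*(x1^2+y1^2) - (X^2+Y^2) = s*(1-s)*(u^2+v^2)"
    unfolding X_def Y_def u_def v_def by (simp add: algebra_simps power2_eq_square)
  have "s*(1-s)*(u^2+v^2) \<ge> 0" using s by simp
  moreover have "(1-s)*(x2^2+y2^2) + s*(x1^2+y1^2) \<le> (1-s)*R + s*R"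
    using s d1 d2 by (intro add_mono mult_left_mono) auto
  ultimately have h1: "X^2+Y^2 \<le> R" using id by (simp add: algebra_simps)
  have h2: "F 1 - F 0 = (\<alpha>*x1^2+\<beta>*y1^2-\<gamma>)*y1 - (\<alpha>*x2^2+\<beta>*y2^2-\<gamma>)*y2"
    unfolding F_def u_def v_def by simp
  have h3: "F' s = 2*\<alpha>*X*Y*(x1-x2) + (\<alpha>*X^2+3*\<beta>*Y^2-\<gamma>)*(y1-y2)"
    unfolding F'_def X_def Y_def u_def v_def by simp
  have h4: "F 1 - F 0 = F' s" using s(3) by simp
  have eq: "(\<alpha>*x1^2+\<beta>*y1^2-\<gamma>)*y1 - (\<alpha>*x2^2+\<beta>*y2^2-\<gamma>)*y2
           = 2*\<alpha>*X*Y*(x1-x2) + (\<alpha>*X^2+3*\<beta>*Y^2-\<gamma>)*(y1-y2)"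
    using h2 h3 h4 by simp
  show ?thesis using h1 eq by blast
qed



lemma quad:
  fixes k m T D b u v lam :: real
  assumes k: "k > 0" and m: "m > 0" and det: "k*D - b^2 \<ge> m" and T: "k + D \<le> T"
    and lam: "lam = m / T"
  shows "k*u^2 + 2*b*u* v + D* v^2 \<ge> lam*(u^2+v^2)"
proof -
  have mkD: "m \<le> k*D" using det zero_le_power2[of b] by linarith
  have D: "D > 0" using mkD m k zero_less_mult_pos[of k D] by linarith
  have Tp: "T > 0" using T D k by linarith
  have lT: "lam * T = m" using lam Tp by simp
  have l0: "lam > 0" using lam Tp m by simp
  note mkD
  also have "k*D < k*T" using k D T by simp
  finally have "lam * T < k * T" using lT by simp
  hence lk: "lam < k" using Tp by simp
  define p where "p = k - lam"
  define q where "q = D - lam"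
  have pq: "p*q - b^2 \<ge> 0"
  proof -
    have "p*q - b^2 = (k*D - b^2) - lam*(k+D) + lam^2"
      unfolding p_def q_def by (simp add: algebra_simps power2_eq_square)
    moreover have "lam*(k+D) \<le> lam*T" using T l0 by simp
    ultimately show ?thesis using det lT zero_le_power2[of lam] by linarith
  qed
  have p0: "p > 0" using lk p_def by simp
  have "p*(p*u^2 + 2*b*u* v + q* v^2) = (p*u + b* v)^2 + (p*q - b^2)* v^2"
    by (simp add: algebra_simps power2_eq_square)
  also have "\<dots> \<ge> 0" using pq by simp
  finally have "p*u^2 + 2*b*u* v + q* v^2 \<ge> 0" using p0
    by (simp add: zero_le_mult_iff)
  thus ?thesis unfolding p_def q_def by (simp add: algebra_simps)
qed



lemma gUV:
  fixes k \<alpha> \<beta> \<gamma> U V R m :: real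
  assumes k: "k > 0" and a: "\<alpha> \<ge> 0" and b: "\<beta> \<ge> 0"
    and U: "U \<ge> 0" and V: "V \<ge> 0" and UV: "U + V \<le> R"
    and m: "m \<le> k*(k-\<gamma>)"
    and h: "3*k*\<beta> - \<alpha>^2*U < 0 \<Longrightarrow> k*\<alpha>*U + k*(k-\<gamma>) + (R-U)*(3*k*\<beta> - \<alpha>^2*U) \<ge> m"
  shows "k*\<alpha>*U + 3*k*\<beta>*V + k*(k-\<gamma>) - \<alpha>^2*U*V \<ge> m"
proof -
  have eq: "k*\<alpha>*U + 3*k*\<beta>*V + k*(k-\<gamma>) - \<alpha>^2*U*V = k*\<alpha>*U + k*(k-\<gamma>) + V*(3*k*\<beta> - \<alpha>^2*U)"
    by (simp add: algebra_simps)
  have kaU: "k*\<alpha>*U \<ge> 0" using k a U by simp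
  show ?thesis
  proof (cases "3*k*\<beta> - \<alpha>^2*U < 0")
    case True
    have "V*(3*k*\<beta> - \<alpha>^2*U) \<ge> (R-U)*(3*k*\<beta> - \<alpha>^2*U)"
      using True UV by (intro mult_right_mono_neg) auto
    then show ?thesis using eq h[OF True] by linarith
  next
    case False
    hence "V*(3*k*\<beta> - \<alpha>^2*U) \<ge> 0" using V by simp
    then show ?thesis using eq kaU m by linarith
  qed
qed

lemma g_bound:
  fixes \<alpha> \<beta> \<gamma> c a r :: real
  assumes "\<alpha> \<ge> 0" and "\<beta> \<ge> 0" and "\<gamma> < 0" and "c * a > 0"
    and cond:
      "(\<alpha> = 0 \<and> 3 * \<beta> * r^2 > \<gamma> - c * a)
       \<or> (\<alpha> \<noteq> 0 \<and> \<alpha> > 3 * \<beta> \<and> r^2 \<le> (c*a*\<alpha> - 3*c*a*\<beta>) / \<alpha>^2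
            \<and> 3 * \<beta> * r^2 > \<gamma> - c * a)
       \<or> (\<alpha> \<noteq> 0 \<and> \<alpha> < 3 * \<beta> \<and> r^2 \<le> (3*c*a*\<beta> - c*a*\<alpha>) / \<alpha>^2
            \<and> \<alpha> * r^2 > \<gamma> - c * a)
       \<or> (3*c*a*\<alpha>*\<beta> + \<alpha>^2 * (c*a - \<gamma>) > 0
            \<and> r^2 \<ge> max ((c*a*\<alpha> - 3*c*a*\<beta>) / \<alpha>^2) ((3*c*a*\<beta> - c*a*\<alpha>) / \<alpha>^2)
            \<and> (c*a*\<alpha> + 3*c*a*\<beta>
                 - 2 * sqrt (3 * c^2 * a^2 * \<alpha> * \<beta> + \<alpha>^2 * c * a * (c*a - \<gamma>))) / \<alpha>^2 < r^2
            \<and> r^2 < (c*a*\<alpha> + 3*c*a*\<beta>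
                 + 2 * sqrt (3 * c^2 * a^2 * \<alpha> * \<beta> + \<alpha>^2 * c * a * (c*a - \<gamma>))) / \<alpha>^2)"
  shows "\<exists>m>0. \<forall>X Y. X^2+Y^2 \<le> r^2 \<longrightarrow> c*a*(\<alpha>*X^2+3*\<beta>*Y^2-\<gamma>+c*a) - \<alpha>^2*X^2*Y^2 \<ge> m"
proof -
  define k where "k = c*a"
  define R where "R = r^2"
  have k: "k > 0" using assms(4) k_def by simp
  have a: "\<alpha> \<ge> 0" and b: "\<beta> \<ge> 0" and g: "\<gamma> < 0" using assms by auto
  have e: "3*c*a*\<beta> = 3*k*\<beta>" "3*c*a*\<alpha>*\<beta> = 3*k*\<alpha>*\<beta>"
          "\<alpha>^2*c*a*(k-\<gamma>) = \<alpha>^2*k*(k-\<gamma>)" "3*c^2*a^2*\<alpha>*\<beta> = 3*k^2*\<alpha>*\<beta>"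
    by (simp_all add: k_def power2_eq_square algebra_simps)
  have cond': "(\<alpha> = 0)
       \<or> (\<alpha> \<noteq> 0 \<and> \<alpha> > 3 * \<beta> \<and> R \<le> (k*\<alpha> - 3*k*\<beta>) / \<alpha>^2)
       \<or> (\<alpha> \<noteq> 0 \<and> \<alpha> < 3 * \<beta> \<and> R \<le> (3*k*\<beta> - k*\<alpha>) / \<alpha>^2)
       \<or> (3*k*\<alpha>*\<beta> + \<alpha>^2 * (k - \<gamma>) > 0
            \<and> (k*\<alpha> + 3*k*\<beta> - 2 * sqrt (3*k^2*\<alpha>*\<beta> + \<alpha>^2*k*(k - \<gamma>))) / \<alpha>^2 < R
            \<and> R < (k*\<alpha> + 3*k*\<beta> + 2 * sqrt (3*k^2*\<alpha>*\<beta> + \<alpha>^2*k*(k - \<gamma>))) / \<alpha>^2)"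
    using cond[unfolded k_def[symmetric] R_def[symmetric] e] by argo
  define m0 where "m0 = k*(k-\<gamma>)"
  have m0: "m0 > 0" using k g m0_def by simp
  have main: "\<exists>m>0. m \<le> m0 \<and> (\<forall>U. 0 \<le> U \<longrightarrow> U \<le> R \<longrightarrow> 3*k*\<beta> - \<alpha>^2*U < 0 \<longrightarrow>
                 k*\<alpha>*U + k*(k-\<gamma>) + (R-U)*(3*k*\<beta> - \<alpha>^2*U) \<ge> m)"
  proof -
    consider "\<alpha> = 0"
      | "\<alpha> \<noteq> 0 \<and> \<alpha> > 3 * \<beta> \<and> R \<le> (k*\<alpha> - 3*k*\<beta>) / \<alpha>^2"
      | "\<alpha> \<noteq> 0 \<and> \<alpha> < 3 * \<beta> \<and> R \<le> (3*k*\<beta> - k*\<alpha>) / \<alpha>^2"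
      | "3*k*\<alpha>*\<beta> + \<alpha>^2 * (k - \<gamma>) > 0
            \<and> (k*\<alpha> + 3*k*\<beta> - 2 * sqrt (3*k^2*\<alpha>*\<beta> + \<alpha>^2*k*(k - \<gamma>))) / \<alpha>^2 < R
            \<and> R < (k*\<alpha> + 3*k*\<beta> + 2 * sqrt (3*k^2*\<alpha>*\<beta> + \<alpha>^2*k*(k - \<gamma>))) / \<alpha>^2"
      using cond' by blast
    then show ?thesis
    proof cases
      case 1
      have "3*k*\<beta> \<ge> 0" using k b by simp
      then show ?thesis using m0 1 by (intro exI[of _ m0]) auto
    next
      case 2
      have ap: "\<alpha>^2 > 0" using 2 by simp
      have R: "\<alpha>^2*R \<le> k*\<alpha> - 3*k*\<beta>" using 2 ap by (simp add: le_divide_eq mult.commute)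
      have "\<forall>U. 0 \<le> U \<longrightarrow> U \<le> R \<longrightarrow> k*\<alpha>*U + k*(k-\<gamma>) + (R-U)*(3*k*\<beta> - \<alpha>^2*U) \<ge> m0"
      proof (intro allI impI)
        fix U assume U: "0 \<le> U" "U \<le> R"
        have d: "k*\<alpha>*U + k*(k-\<gamma>) + (R-U)*(3*k*\<beta> - \<alpha>^2*U)
              = (k*(k-\<gamma>) + 3*k*\<beta>*R) + U*(\<alpha>^2*U + (k*\<alpha> - 3*k*\<beta> - \<alpha>^2*R))"
          by (simp add: algebra_simps power2_eq_square)
        have "U*(\<alpha>^2*U + (k*\<alpha> - 3*k*\<beta> - \<alpha>^2*R)) \<ge> 0" using U R by simp
        moreover have "3*k*\<beta>*R \<ge> 0" using k b U by simp
        ultimately show "k*\<alpha>*U + k*(k-\<gamma>) + (R-U)*(3*k*\<beta> - \<alpha>^2*U) \<ge> m0"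
          using d m0_def by linarith
      qed
      then show ?thesis using m0 by (intro exI[of _ m0]) auto
    next
      case 3
      have ap: "\<alpha>^2 > 0" using 3 by simp
      have R: "\<alpha>^2*R \<le> 3*k*\<beta> - k*\<alpha>" using 3 ap by (simp add: le_divide_eq mult.commute)
      have "\<forall>U. 0 \<le> U \<longrightarrow> U \<le> R \<longrightarrow> k*\<alpha>*U + k*(k-\<gamma>) + (R-U)*(3*k*\<beta> - \<alpha>^2*U) \<ge> m0"
      proof (intro allI impI)
        fix U assume U: "0 \<le> U" "U \<le> R"
        have d: "k*\<alpha>*U + k*(k-\<gamma>) + (R-U)*(3*k*\<beta> - \<alpha>^2*U)
              = (k*(k-\<gamma>) + k*\<alpha>*R) + (R-U)*(3*k*\<beta> - k*\<alpha> - \<alpha>^2*U)"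
          by (simp add: algebra_simps power2_eq_square)
        have "\<alpha>^2*U \<le> \<alpha>^2*R" using U by (simp add: mult_left_mono)
        hence "(R-U)*(3*k*\<beta> - k*\<alpha> - \<alpha>^2*U) \<ge> 0" using U R by simp
        moreover have "k*\<alpha>*R \<ge> 0" using k a U by simp
        ultimately show "k*\<alpha>*U + k*(k-\<gamma>) + (R-U)*(3*k*\<beta> - \<alpha>^2*U) \<ge> m0"
          using d m0_def by linarith
      qed
      then show ?thesis using m0 by (intro exI[of _ m0]) auto
    next
      case 4
      define Q where "Q = 3*k^2*\<alpha>*\<beta> + \<alpha>^2*k*(k - \<gamma>)"
      define sq where "sq = sqrt Q"
      have ap0: "\<alpha> \<noteq> 0" using 4 by auto
      have ap: "\<alpha>^2 > 0" using ap0 by simp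
      have Q0: "Q \<ge> 0" unfolding Q_def using k a b g by simp
      have ss: "sq^2 = Q" unfolding sq_def using Q0 by simp
      have l1: "k*\<alpha> + 3*k*\<beta> - 2 * sq < \<alpha>^2*R"
        using 4 ap unfolding sq_def Q_def by (simp add: divide_less_eq mult.commute)
      have l2: "\<alpha>^2*R < k*\<alpha> + 3*k*\<beta> + 2 * sq"
        using 4 ap unfolding sq_def Q_def by (simp add: less_divide_eq mult.commute)
      define z where "z = \<alpha>^2*R - k*(\<alpha>+3*\<beta>)"
      have zl: "\<bar>z\<bar> < 2 * sq" using l1 l2 unfolding z_def by (simp add: algebra_simps abs_less_iff)
      have "\<bar>z\<bar>^2 < (2 * sq)^2"
        by (rule power_strict_mono) (use zl in auto)
      hence dn: "4*Q - z^2 > 0" using ss by (simp add: power_mult_distrib)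
      define m where "m = min m0 ((4*Q - z^2) / (4*\<alpha>^2))"
      have mpos: "m > 0" unfolding m_def using m0 dn ap by simp
      have "\<forall>U. 0 \<le> U \<longrightarrow> U \<le> R \<longrightarrow> k*\<alpha>*U + k*(k-\<gamma>) + (R-U)*(3*k*\<beta> - \<alpha>^2*U) \<ge> m"
      proof (intro allI impI)
        fix U assume U: "0 \<le> U" "U \<le> R"
        have id: "4*\<alpha>^2*(k*\<alpha>*U + k*(k-\<gamma>) + (R-U)*(3*k*\<beta> - \<alpha>^2*U))
                 = (2*\<alpha>^2*U + k*\<alpha> - 3*k*\<beta> - \<alpha>^2*R)^2 + (4*Q - z^2)"
          unfolding Q_def z_def by (simp add: algebra_simps power2_eq_square)
        hence "4*\<alpha>^2*(k*\<alpha>*U + k*(k-\<gamma>) + (R-U)*(3*k*\<beta> - \<alpha>^2*U)) \<ge> 4*Q - z^2"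
          by simp
        hence "k*\<alpha>*U + k*(k-\<gamma>) + (R-U)*(3*k*\<beta> - \<alpha>^2*U) \<ge> (4*Q - z^2) / (4*\<alpha>^2)"
          using ap by (simp add: divide_le_eq mult.commute)
        then show "k*\<alpha>*U + k*(k-\<gamma>) + (R-U)*(3*k*\<beta> - \<alpha>^2*U) \<ge> m"
          unfolding m_def by linarith
      qed
      then show ?thesis using mpos by (intro exI[of _ m]) (auto simp: m_def)
    qed
  qed
  then obtain m where m: "m > 0" "m \<le> m0"
    and mh: "\<And>U. 0 \<le> U \<Longrightarrow> U \<le> R \<Longrightarrow> 3*k*\<beta> - \<alpha>^2*U < 0 \<Longrightarrow>
                 k*\<alpha>*U + k*(k-\<gamma>) + (R-U)*(3*k*\<beta> - \<alpha>^2*U) \<ge> m" by blast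
  show ?thesis
  proof (intro exI[of _ m] conjI allI impI)
    show "m > 0" by fact
    fix X Y :: real assume XY: "X^2 + Y^2 \<le> r^2"
    have U: "X^2 \<le> R" using XY R_def zero_le_power2[of Y] by linarith
    have "k*\<alpha>*X^2 + 3*k*\<beta>*Y^2 + k*(k-\<gamma>) - \<alpha>^2*X^2*Y^2 \<ge> m"
      by (rule gUV[OF k a b zero_le_power2 zero_le_power2 _ _ mh])
         (use XY R_def m m0_def U in auto)
    then show "c*a*(\<alpha>*X^2+3*\<beta>*Y^2-\<gamma>+c*a) - \<alpha>^2*X^2*Y^2 \<ge> m"
      unfolding k_def by (simp add: algebra_simps)
  qed
qed


theorem theorem4p8:
  fixes \<alpha> \<beta> \<gamma> \<omega> c a r :: real and N :: nat
    and x y :: "real \<Rightarrow> nat \<Rightarrow> real"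
  assumes "\<alpha> \<ge> 0" and "\<beta> \<ge> 0" and "\<gamma> < 0" and "\<omega>^2 = 1"
    and "c * a > 0" and "N \<ge> 2" and "r > 0"
    and cond:
      "(\<alpha> = 0 \<and> 3 * \<beta> * r^2 > \<gamma> - c * a)
       \<or> (\<alpha> \<noteq> 0 \<and> \<alpha> > 3 * \<beta> \<and> r^2 \<le> (c*a*\<alpha> - 3*c*a*\<beta>) / \<alpha>^2
            \<and> 3 * \<beta> * r^2 > \<gamma> - c * a)
       \<or> (\<alpha> \<noteq> 0 \<and> \<alpha> < 3 * \<beta> \<and> r^2 \<le> (3*c*a*\<beta> - c*a*\<alpha>) / \<alpha>^2
            \<and> \<alpha> * r^2 > \<gamma> - c * a)
       \<or> (3*c*a*\<alpha>*\<beta> + \<alpha>^2 * (c*a - \<gamma>) > 0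
            \<and> r^2 \<ge> max ((c*a*\<alpha> - 3*c*a*\<beta>) / \<alpha>^2) ((3*c*a*\<beta> - c*a*\<alpha>) / \<alpha>^2)
            \<and> (c*a*\<alpha> + 3*c*a*\<beta>
                 - 2 * sqrt (3 * c^2 * a^2 * \<alpha> * \<beta> + \<alpha>^2 * c * a * (c*a - \<gamma>))) / \<alpha>^2 < r^2
            \<and> r^2 < (c*a*\<alpha> + 3*c*a*\<beta>
                 + 2 * sqrt (3 * c^2 * a^2 * \<alpha> * \<beta> + \<alpha>^2 * c * a * (c*a - \<gamma>))) / \<alpha>^2)"
    and sol: "coupled_solution \<alpha> \<beta> \<gamma> \<omega> c a N x y"
    and init: "\<forall>i<N. (x 0 i)^2 + (y 0 i)^2 \<le> r^2"
  shows "\<forall>i<N. \<forall>j<N. \<exists>C K. K > 0 \<and>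
           (\<forall>t\<ge>0. \<bar>x t i - x t j\<bar> + \<bar>y t i - y t j\<bar> \<le> C * exp (- K * t))"
proof -
  define k where "k = c * a"
  have k: "k > 0" using assms(5) k_def by simp
  have Nr: "real N > 0" using assms(6) by simp
  have w1: "\<omega>^2 = 1" using assms(4) by simp
  define q where "q = k / real N"
  have qN: "k = q * real N" using Nr by (simp add: q_def)
  have q0: "q \<ge> 0" using k Nr by (simp add: q_def)
  define Dx where "Dx t i = y t i + (c * a / real N) * (\<Sum>j<N. x t j - x t i)" for t i
  define Dy where "Dy t i = - (\<alpha> * (x t i)^2 + \<beta> * (y t i)^2 - \<gamma>) * y t i - \<omega>^2 * x t i
             + (c * a / real N) * (\<Sum>j<N. y t j - y t i)" for t i
  have dx: "((\<lambda>s. x s i) has_real_derivative Dx t i) (at t within {0..})" if "i < N" "t \<ge> 0" for i t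
    using sol that unfolding coupled_solution_def Dx_def by blast
  have dy: "((\<lambda>s. y s i) has_real_derivative Dy t i) (at t within {0..})" if "i < N" "t \<ge> 0" for i t
    using sol that unfolding coupled_solution_def Dy_def by blast
  define E where "E t i = (x t i)^2 + (y t i)^2" for t i
  have dE: "((\<lambda>s. E s i) has_real_derivative (2 * x t i * Dx t i + 2 * y t i * Dy t i)) (at t within {0..})"
    if "i < N" "t \<ge> 0" for i t
    unfolding E_def by (auto intro!: derivative_eq_intros dx[OF that] dy[OF that])
  have Eb: "2 * x t i * Dx t i + 2 * y t i * Dy t i \<le> q * (\<Sum>j<N. E t j - E t i)" for i t
  proof -
    define Sx where "Sx = (\<Sum>j<N. x t j - x t i)"
    define Sy where "Sy = (\<Sum>j<N. y t j - y t i)"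
    define A where "A = \<alpha> * (x t i)^2 + \<beta> * (y t i)^2 - \<gamma>"
    have "\<alpha> * (x t i)^2 \<ge> 0" "\<beta> * (y t i)^2 \<ge> 0" using assms(1,2) by simp_all
    hence A0: "A \<ge> 0" using assms(3) unfolding A_def by linarith
    have e1: "2 * x t i * Dx t i + 2 * y t i * Dy t i = -2 * A * (y t i)^2 + 2 * q * (x t i * Sx + y t i * Sy)"
      unfolding Dx_def Dy_def k_def[symmetric] q_def[symmetric] Sx_def[symmetric] Sy_def[symmetric] A_def[symmetric]
      using w1 by (simp add: algebra_simps power2_eq_square)
    have e2: "x t i * Sx + y t i * Sy = (\<Sum>j<N. x t i * (x t j - x t i) + y t i * (y t j - y t i))"
      unfolding Sx_def Sy_def by (simp add: sum.distrib sum_distrib_left)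
    have e3: "(\<Sum>j<N. 2 * (x t i * (x t j - x t i) + y t i * (y t j - y t i))) \<le> (\<Sum>j<N. E t j - E t i)"
    proof (rule sum_mono)
      fix j
      have "(E t j - E t i) - 2 * (x t i * (x t j - x t i) + y t i * (y t j - y t i)) = (x t j - x t i)^2 + (y t j - y t i)^2"
        unfolding E_def by (simp add: algebra_simps power2_eq_square)
      moreover have "(x t j - x t i)^2 + (y t j - y t i)^2 \<ge> 0" by simp
      ultimately show "2 * (x t i * (x t j - x t i) + y t i * (y t j - y t i)) \<le> E t j - E t i" by linarith
    qed
    have e4: "2 * (x t i * Sx + y t i * Sy) \<le> (\<Sum>j<N. E t j - E t i)"
      using e2 e3 by (simp add: sum_distrib_left)
    have "2 * q * (x t i * Sx + y t i * Sy) = q * (2 * (x t i * Sx + y t i * Sy))" by simp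
    also have "\<dots> \<le> q * (\<Sum>j<N. E t j - E t i)" using e4 q0 by (rule mult_left_mono)
    finally have e5: "2 * q * (x t i * Sx + y t i * Sy) \<le> q * (\<Sum>j<N. E t j - E t i)" .
    have "A * (y t i)^2 \<ge> 0" using A0 by simp
    then show ?thesis using e1 e5 by linarith
  qed
  define Phi where "Phi t = (\<Sum>i<N. pos2 (E t i - r^2))" for t
  define Phi' where "Phi' t = (\<Sum>i<N. 2 * max (E t i - r^2) 0 * (2 * x t i * Dx t i + 2 * y t i * Dy t i))" for t
  have dPhi: "(Phi has_real_derivative Phi' t) (at t within {0..})" if "t \<ge> 0" for t
    unfolding Phi_def Phi'_def
    apply (rule DERIV_sum)
    apply (rule DERIV_chain2[OF pos2_deriv])
    by (auto intro!: derivative_eq_intros dE that)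
  have Phi'_le: "Phi' t \<le> 0" for t
  proof -
    have "Phi' t \<le> (\<Sum>i<N. 2 * max (E t i - r^2) 0 * (q * (\<Sum>j<N. E t j - E t i)))"
      unfolding Phi'_def by (intro sum_mono mult_left_mono Eb) auto
    also have "\<dots> = (\<Sum>i<N. (2 * q) * (max (E t i - r^2) 0 * (\<Sum>j<N. (E t j - r^2) - (E t i - r^2))))"
      by (rule sum.cong) (simp_all add: algebra_simps)
    also have "\<dots> = (2 * q) * (\<Sum>i<N. max (E t i - r^2) 0 * (\<Sum>j<N. (E t j - r^2) - (E t i - r^2)))"
      by (simp add: sum_distrib_left)
    also have "\<dots> \<le> 0"
      using comb_ineq[of "\<lambda>i. E t i - r^2" N] q0 by (simp add: mult_nonneg_nonpos)
    finally show ?thesis .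
  qed
  have trap: "(x t i)^2 + (y t i)^2 \<le> r^2" if it: "i < N" "t \<ge> 0" for i t
  proof -
    have "Phi t \<le> Phi 0" by (rule nonincr_from_deriv[OF dPhi Phi'_le it(2)])
    moreover have "Phi 0 = 0" unfolding Phi_def
      using init by (intro sum.neutral) (auto simp: pos2_def E_def)
    moreover have nn: "\<forall>i\<in>{..<N}. pos2 (E t i - r^2) \<ge> 0" by (simp add: pos2_def)
    ultimately have "Phi t = 0" unfolding Phi_def using sum_nonneg[of "{..<N}"] by (smt (verit) nn)
    then have "\<forall>i\<in>{..<N}. pos2 (E t i - r^2) = 0"
      using sum_nonneg_eq_0_iff[OF finite_lessThan[of N], where f="\<lambda>i. pos2 (E t i - r^2)"] nn unfolding Phi_def by blast
    then have "pos2 (E t i - r^2) = 0" using it(1) by simp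
    then show ?thesis by (simp add: pos2_def E_def max_def split: if_splits)
  qed
  obtain m where m: "m > 0"
    and mg: "\<And>X Y. X^2+Y^2 \<le> r^2 \<Longrightarrow> c*a*(\<alpha>*X^2+3*\<beta>*Y^2-\<gamma>+c*a) - \<alpha>^2*X^2*Y^2 \<ge> m"
    using g_bound[OF assms(1,2,3,5) cond] by blast
  define T where "T = 2*k + (\<alpha>+3*\<beta>)*r^2 - \<gamma>"
  define lam where "lam = m / T"
  have "(\<alpha>+3*\<beta>)*r^2 \<ge> 0" using assms(1,2) by simp
  hence Tpos: "T > 0" unfolding T_def using k assms(3) by linarith
  have lpos: "lam > 0" unfolding lam_def using m Tpos by simp
  show ?thesis
  proof (intro allI impI)
    fix i j assume ij: "i < N" "j < N"
    define V where "V t = (x t i - x t j)^2 + (y t i - y t j)^2" for t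
    define V' where "V' t = 2*(x t i - x t j)*(Dx t i - Dx t j) + 2*(y t i - y t j)*(Dy t i - Dy t j)" for t
    have dV: "(V has_real_derivative V' t) (at t within {0..})" if "t \<ge> 0" for t
      unfolding V_def V'_def
      by (auto intro!: derivative_eq_intros dx[OF ij(1) that] dx[OF ij(2) that] dy[OF ij(1) that] dy[OF ij(2) that] simp: algebra_simps)
    have sd: "(\<Sum>l<N. f l - f i) - (\<Sum>l<N. f l - f j) = real N * (f j - f i)" for f :: "nat \<Rightarrow> real"
      by (simp add: sum_subtractf algebra_simps)
    have V'le: "V' t \<le> -2*lam*V t" if t: "t \<ge> 0" for t
    proof -
      define u where "u = x t i - x t j"
      define v where "v = y t i - y t j"
      define Fi where "Fi = (\<alpha>*(x t i)^2+\<beta>*(y t i)^2-\<gamma>)*(y t i)"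
      define Fj where "Fj = (\<alpha>*(x t j)^2+\<beta>*(y t j)^2-\<gamma>)*(y t j)"
      have hx: "Dx t i - Dx t j = v - k*u"
      proof -
        have "Dx t i - Dx t j = v + q * ((\<Sum>l<N. x t l - x t i) - (\<Sum>l<N. x t l - x t j))"
          unfolding Dx_def k_def[symmetric] q_def[symmetric] v_def by (simp add: algebra_simps)
        also have "\<dots> = v + q * (real N * (x t j - x t i))" using sd[of "\<lambda>l. x t l"] by simp
        also have "\<dots> = v - k*u" unfolding u_def qN by (simp add: algebra_simps)
        finally show ?thesis .
      qed
      have hy: "Dy t i - Dy t j = -(Fi - Fj) - u - k* v"
      proof -
        have "Dy t i - Dy t j = -(Fi - Fj) - u + q * ((\<Sum>l<N. y t l - y t i) - (\<Sum>l<N. y t l - y t j))"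
          unfolding Dy_def k_def[symmetric] q_def[symmetric] u_def Fi_def Fj_def using w1
          by (simp add: algebra_simps)
        also have "\<dots> = -(Fi - Fj) - u + q * (real N * (y t j - y t i))" using sd[of "\<lambda>l. y t l"] by simp
        also have "\<dots> = -(Fi - Fj) - u - k* v" unfolding v_def qN by (simp add: algebra_simps)
        finally show ?thesis .
      qed
      obtain X Y where XY: "X^2+Y^2 \<le> r^2"
        and F: "Fi - Fj = 2*\<alpha>*X*Y*u + (\<alpha>*X^2+3*\<beta>*Y^2-\<gamma>)* v"
        using mvt_f[OF trap[OF ij(1) t] trap[OF ij(2) t], of \<alpha> \<beta> \<gamma>] unfolding Fi_def Fj_def u_def v_def
        by blast
      define D where "D = \<alpha>*X^2+3*\<beta>*Y^2-\<gamma>+k"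
      have det: "k*D - (\<alpha>*X*Y)^2 \<ge> m"
        using mg[OF XY] unfolding D_def k_def by (simp add: power_mult_distrib)
      have X2: "X^2 \<le> r^2" "Y^2 \<le> r^2" using XY zero_le_power2[of X] zero_le_power2[of Y] by linarith+
      have "\<alpha>*X^2 \<le> \<alpha>*r^2" using X2(1) assms(1) by (rule mult_left_mono)
      moreover have "\<beta>*Y^2 \<le> \<beta>*r^2" using X2(2) assms(2) by (rule mult_left_mono)
      ultimately have kD: "k + D \<le> T" unfolding D_def T_def by (simp add: algebra_simps)
      have Q: "k*u^2 + 2*(\<alpha>*X*Y)*u* v + D* v^2 \<ge> lam*(u^2+v^2)"
        by (rule quad[OF k m det kD lam_def])
      have "V' t = -2*(k*u^2 + 2*(\<alpha>*X*Y)*u* v + D* v^2)"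
        unfolding V'_def u_def[symmetric] v_def[symmetric] hx hy F D_def
        by (simp add: algebra_simps power2_eq_square)
      moreover have "V t = u^2+v^2" unfolding V_def u_def v_def by simp
      ultimately show ?thesis using Q by simp
    qed
    define W where "W t = V t * exp (2*lam*t)" for t
    define W' where "W' t = V' t * exp (2*lam*t) + V t * (exp (2*lam*t) * (2*lam))" for t
    have dW: "(W has_real_derivative W' t) (at t within {0..})" if "t \<ge> 0" for t
      unfolding W_def W'_def by (auto intro!: derivative_eq_intros dV[OF that])
    have W'le: "W' t \<le> 0" if "t \<ge> 0" for t
    proof -
      have "W' t = (V' t + 2*lam*V t) * exp (2*lam*t)" unfolding W'_def by (simp add: algebra_simps)
      moreover have "V' t + 2*lam*V t \<le> 0" using V'le[OF that] by simp
      ultimately show ?thesis by (simp add: mult_nonpos_nonneg)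
    qed
    show "\<exists>C K. K > 0 \<and> (\<forall>t\<ge>0. \<bar>x t i - x t j\<bar> + \<bar>y t i - y t j\<bar> \<le> C * exp (- K * t))"
    proof (rule exI[of _ "sqrt (2 * V 0)"], rule exI[of _ lam], intro conjI allI impI)
      show "lam > 0" by (rule lpos)
      fix t :: real assume t: "t \<ge> 0"
      have "W t \<le> W 0" by (rule nonincr_from_deriv[OF dW W'le t])
      hence Wt: "V t * exp (2*lam*t) \<le> V 0" unfolding W_def by simp
      have ee: "exp (- lam * t)^2 * exp (2*lam*t) = 1"
      proof -
        have "exp (- lam * t)^2 * exp (2*lam*t) = exp (- lam * t + - lam * t + 2*lam*t)"
          by (simp only: power2_eq_square exp_add)
        also have "- lam * t + - lam * t + 2*lam*t = 0" by simp
        finally show ?thesis by simp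
      qed
      have "V t = (V t * exp (2*lam*t)) * exp (- lam * t)^2" using ee by (simp add: algebra_simps)
      also have "\<dots> \<le> V 0 * exp (- lam * t)^2" using Wt by (rule mult_right_mono) simp
      finally have Vt: "V t \<le> V 0 * exp (- lam * t)^2" .
      have sq: "(\<bar>x t i - x t j\<bar> + \<bar>y t i - y t j\<bar>)^2 \<le> 2 * V t"
      proof -
        have "2 * V t - (\<bar>x t i - x t j\<bar> + \<bar>y t i - y t j\<bar>)^2 = (\<bar>x t i - x t j\<bar> - \<bar>y t i - y t j\<bar>)^2"
          unfolding V_def by (simp add: algebra_simps power2_eq_square)
        thus ?thesis by (smt (verit) zero_le_power2)
      qed
      have "\<bar>x t i - x t j\<bar> + \<bar>y t i - y t j\<bar> \<le> sqrt (2 * V t)" using sq by (rule real_le_rsqrt)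
      also have "\<dots> \<le> sqrt (2 * V 0 * exp (- lam * t)^2)" using Vt by simp
      also have "\<dots> = sqrt (2 * V 0) * exp (- lam * t)" by (simp add: real_sqrt_mult)
      finally show "\<bar>x t i - x t j\<bar> + \<bar>y t i - y t j\<bar> \<le> sqrt (2 * V 0) * exp (- lam * t)" .
    qed
  qed
qed

end
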